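(* Let $A$ be a densely defined closed linear operator on a complex Banach space $X$, and let $B$ be a bounded linear operator on $X$ such that (a) $BA\subset AB$, and (b) the point spectrum of $B$ is empty. Then $A$ has no eigenvalues of finite multiplicity. *)

theory Defs
  imports "HOL-Analysis.Analysis"
begin

class complex_vector = real_vector +
  fixes scaleC :: "complex \<Rightarrow> 'a \<Rightarrow> 'a"
  assumes scaleC_add_right: "scaleC a (x + y) = scaleC a x + scaleC a y"
    and scaleC_add_left: "scaleC (a + b) x = scaleC a x + scaleC b x"
    and scaleC_scaleC: "scaleC a (scaleC b x) = scaleC (a * b) x"
    and scaleC_one: "scaleC 1 x = x"
    and scaleR_scaleC: "scaleR r x = scaleC (complex_of_real r) x"

class complex_normed_vector = complex_vector + real_normed_vector +
  assumes norm_scaleC: "norm (scaleC a x) = cmod a * norm x"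

class complex_banach = complex_normed_vector + banach

definition csubspace :: "'a::complex_vector set \<Rightarrow> bool" where
  "csubspace S \<longleftrightarrow> 0 \<in> S \<and> (\<forall>x\<in>S. \<forall>y\<in>S. x + y \<in> S) \<and> (\<forall>c. \<forall>x\<in>S. scaleC c x \<in> S)"

definition cspan :: "'a::complex_vector set \<Rightarrow> 'a set" where
  "cspan S = {\<Sum>x\<in>T. scaleC (c x) x | T c. finite T \<and> T \<subseteq> S}"

definition cfinite_dim :: "'a::complex_vector set \<Rightarrow> bool" where
  "cfinite_dim E \<longleftrightarrow> (\<exists>S. finite S \<and> S \<subseteq> E \<and> E = cspan S)"

definition clinear_on :: "'a::complex_vector set \<Rightarrow> ('a \<Rightarrow> 'a) \<Rightarrow> bool" where
  "clinear_on D A \<longleftrightarrow> csubspace D \<and>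
     (\<forall>x\<in>D. \<forall>y\<in>D. A (x + y) = A x + A y) \<and> (\<forall>c. \<forall>x\<in>D. A (scaleC c x) = scaleC c (A x))"

definition graph_on :: "'a set \<Rightarrow> ('a \<Rightarrow> 'b) \<Rightarrow> ('a \<times> 'b) set" where
  "graph_on D A = {(x, A x) | x. x \<in> D}"

definition densely_defined_closed_op :: "'a::complex_normed_vector set \<Rightarrow> ('a \<Rightarrow> 'a) \<Rightarrow> bool" where
  "densely_defined_closed_op D A \<longleftrightarrow> clinear_on D A \<and> closure D = UNIV \<and> closed (graph_on D A)"

definition bounded_clinear :: "('a::complex_normed_vector \<Rightarrow> 'a) \<Rightarrow> bool" where
  "bounded_clinear B \<longleftrightarrow> (\<forall>x y. B (x + y) = B x + B y) \<and> (\<forall>c x. B (scaleC c x) = scaleC c (B x))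
     \<and> (\<exists>K. \<forall>x. norm (B x) \<le> norm x * K)"

text \<open>B A \<subseteq> A B, where dom(BA) = D and dom(AB) = {x. B x \<in> D}.\<close>

definition commutes_incl :: "'a set \<Rightarrow> ('a \<Rightarrow> 'a) \<Rightarrow> ('a \<Rightarrow> 'a) \<Rightarrow> bool" where
  "commutes_incl D A B \<longleftrightarrow> (\<forall>x\<in>D. B x \<in> D \<and> A (B x) = B (A x))"

definition point_spectrum_bdd :: "('a::complex_vector \<Rightarrow> 'a) \<Rightarrow> complex set" where
  "point_spectrum_bdd B = {\<mu>. \<exists>x. x \<noteq> 0 \<and> B x = scaleC \<mu> x}"

definition eigenspace_on :: "'a::complex_vector set \<Rightarrow> ('a \<Rightarrow> 'a) \<Rightarrow> complex \<Rightarrow> 'a set" where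
  "eigenspace_on D A l = {x\<in>D. A x = scaleC l x}"

definition eigenvalue_on :: "'a::complex_vector set \<Rightarrow> ('a \<Rightarrow> 'a) \<Rightarrow> complex \<Rightarrow> bool" where
  "eigenvalue_on D A l \<longleftrightarrow> (\<exists>x\<in>D. x \<noteq> 0 \<and> A x = scaleC l x)"

definition finite_mult_eigenvalue :: "'a::complex_vector set \<Rightarrow> ('a \<Rightarrow> 'a) \<Rightarrow> complex \<Rightarrow> bool" where
  "finite_mult_eigenvalue D A l \<longleftrightarrow> eigenvalue_on D A l \<and> cfinite_dim (eigenspace_on D A l)"

end

theory Submission
  imports Defs "HOL-Computational_Algebra.Fundamental_Theorem_Algebra"
begin

interpretation cv: vector_space "scaleC :: complex \<Rightarrow> 'a::complex_vector \<Rightarrow> 'a"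
  by unfold_locales (simp_all add: scaleC_add_right scaleC_add_left scaleC_scaleC scaleC_one)

lemma cspan_eq: "cspan S = cv.span S"
  unfolding cspan_def cv.span_explicit by blast

lemma fin_dep:
  fixes f :: "nat \<Rightarrow> 'a::complex_vector"
  assumes S: "finite S" "card S \<le> n" and f: "\<forall>i\<le>n. f i \<in> cspan S"
  shows "\<exists>c. (\<exists>i\<le>n. c i \<noteq> 0) \<and> (\<Sum>i\<le>n. scaleC (c i) (f i)) = 0"
proof (cases "inj_on f {..n}")
  case True
  let ?T = "f ` {..n}"
  have cT: "card ?T = Suc n" using True by (simp add: card_image)
  have sub: "?T \<subseteq> cv.span S" using f cspan_eq by blast
  have "cv.dependent ?T"
  proof (rule ccontr)
    assume "\<not> cv.dependent ?T"
    from cv.independent_span_bound[OF S(1) this sub] cT S(2) show False by simp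
  qed
  then obtain U u w where U: "finite U" "U \<subseteq> ?T" "w \<in> U" "u w \<noteq> 0"
    "(\<Sum>x\<in>U. scaleC (u x) x) = 0"
    unfolding cv.dependent_explicit by blast
  define c where "c i = (if f i \<in> U then u (f i) else 0)" for i
  obtain i where i: "i \<le> n" "w = f i" using U by blast
  have "(\<Sum>i\<le>n. scaleC (c i) (f i)) = (\<Sum>i\<in>{..n} \<inter> f -` U. scaleC (u (f i)) (f i))"
    by (rule sum.mono_neutral_cong_right) (auto simp: c_def)
  also have "\<dots> = (\<Sum>x\<in>f ` ({..n} \<inter> f -` U). scaleC (u x) x)"
    by (rule sum.reindex[symmetric, unfolded o_def]) (use True in \<open>auto intro: inj_on_subset\<close>)
  also have "f ` ({..n} \<inter> f -` U) = U" using U(2) by blast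
  finally have "(\<Sum>i\<le>n. scaleC (c i) (f i)) = 0" using U(5) by simp
  moreover have "c i \<noteq> 0" using i U by (simp add: c_def)
  ultimately show ?thesis using i by blast
next
  case False
  then obtain i j where ij: "i \<le> n" "j \<le> n" "i \<noteq> j" "f i = f j"
    unfolding inj_on_def by auto
  define c where "c k = (if k = i then 1 else if k = j then -1 else (0::complex))" for k
  have "(\<Sum>k\<le>n. scaleC (c k) (f k)) = (\<Sum>k\<in>{i,j}. scaleC (c k) (f k))"
    by (rule sum.mono_neutral_right) (use ij in \<open>auto simp: c_def cv.scale_zero_left\<close>)
  also have "\<dots> = 0" using ij by (simp add: c_def cv.scale_minus_left)
  finally show ?thesis using ij by (intro exI[of _ c]) (auto simp: c_def)
qed

definition pev :: "('a \<Rightarrow> 'a) \<Rightarrow> complex poly \<Rightarrow> 'a \<Rightarrow> 'a::complex_vector" where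
  "pev B p w = (\<Sum>i\<le>degree p. scaleC (coeff p i) ((B^^i) w))"

lemma pev_bound: "degree p \<le> N \<Longrightarrow> pev B p w = (\<Sum>i\<le>N. scaleC (coeff p i) ((B^^i) w))"
  unfolding pev_def
  by (rule sum.mono_neutral_left) (auto simp: coeff_eq_0 cv.scale_zero_left)

lemma pev_add: "pev B (p + q) w = pev B p w + pev B q w"
proof -
  let ?N = "max (degree p) (degree q)"
  have "degree (p + q) \<le> ?N" by (rule degree_add_le_max)
  then show ?thesis
    by (simp add: pev_bound[of _ ?N] scaleC_add_left sum.distrib)
qed

lemma pev_smult: "pev B (smult a p) w = scaleC a (pev B p w)"
  by (simp add: pev_bound[of "smult a p" "degree p"] pev_def degree_smult_le
      cv.scale_sum_right scaleC_scaleC)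

lemma add_sum:
  fixes B :: "'a::ab_group_add \<Rightarrow> 'b::ab_group_add"
  assumes "\<forall>x y. B (x + y) = B x + B y"
  shows "B (sum g F) = (\<Sum>x\<in>F. B (g x))"
proof -
  have "B 0 + 0 = B 0 + B 0" using assms[rule_format, of 0 0] by simp
  then have B0: "B 0 = 0" by (metis add_left_imp_eq)
  show ?thesis
    by (induction F rule: infinite_finite_induct) (auto simp: B0 assms)
qed

lemma pev_pCons0:
  assumes "\<forall>x y. B (x + y) = B x + B y" "\<forall>c x. B (scaleC c x) = scaleC c (B x)"
  shows "pev B (pCons 0 q) w = B (pev B q w)"
proof -
  have "pev B (pCons 0 q) w = (\<Sum>i\<le>Suc (degree q). scaleC (coeff (pCons 0 q) i) ((B^^i) w))"
    by (rule pev_bound) (simp add: degree_pCons_le)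
  also have "\<dots> = (\<Sum>i\<le>degree q. scaleC (coeff q i) ((B^^Suc i) w))"
    by (subst sum.atMost_Suc_shift) (simp add: cv.scale_zero_left)
  also have "\<dots> = B (pev B q w)"
    by (simp add: pev_def add_sum[OF assms(1)] assms(2))
  finally show ?thesis .
qed

theorem lemma3p1:
  fixes D :: "'a::complex_banach set" and A B :: "'a \<Rightarrow> 'a"
  assumes "densely_defined_closed_op D A"
    and "bounded_clinear B"
    and "commutes_incl D A B"
    and "point_spectrum_bdd B = {}"
  shows "\<not> (\<exists>l. finite_mult_eigenvalue D A l)"
proof
  assume "\<exists>l. finite_mult_eigenvalue D A l"
  then obtain l where fm: "finite_mult_eigenvalue D A l" by blast
  define E where "E = eigenspace_on D A l"
  obtain v where v: "v \<in> D" "v \<noteq> 0" "A v = scaleC l v"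
    using fm unfolding finite_mult_eigenvalue_def eigenvalue_on_def by blast
  obtain S where S: "finite S" "S \<subseteq> E" "E = cspan S"
    using fm unfolding finite_mult_eigenvalue_def cfinite_dim_def E_def by blast
  have Badd: "\<forall>x y. B (x + y) = B x + B y" and Bsc: "\<forall>c x. B (scaleC c x) = scaleC c (B x)"
    using assms(2) unfolding bounded_clinear_def by auto
  have BE: "B x \<in> E" if "x \<in> E" for x
    using that assms(3) Bsc unfolding E_def eigenspace_on_def commutes_incl_def by auto
  have vE: "v \<in> E" using v by (simp add: E_def eigenspace_on_def)
  have iter: "(B^^i) v \<in> E" for i
    by (induction i) (auto simp: vE BE)
  define n where "n = card S"
  obtain c where c: "\<exists>i\<le>n. c i \<noteq> 0" "(\<Sum>i\<le>n. scaleC (c i) ((B^^i) v)) = 0"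
    using fin_dep[of S n "\<lambda>i. (B^^i) v"] S iter n_def by auto
  define p0 where "p0 = (\<Sum>i\<le>n. monom (c i) i)"
  have cp0: "coeff p0 k = (if k \<le> n then c k else 0)" for k
    unfolding p0_def by (simp add: coeff_sum coeff_monom)
  have dp0: "degree p0 \<le> n"
    by (rule degree_le) (simp add: cp0)
  have p0nz: "p0 \<noteq> 0" using c(1) cp0 by (metis coeff_0)
  have pv0: "pev B p0 v = 0"
    using c(2) by (simp add: pev_bound[OF dp0] cp0)
  define P where "P d \<longleftrightarrow> (\<exists>p. p \<noteq> 0 \<and> pev B p v = 0 \<and> degree p = d)" for d
  have "P (degree p0)" using p0nz pv0 P_def by blast
  define d where "d = (LEAST d. P d)"
  have Pd: "P d" unfolding d_def by (rule LeastI) fact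
  have minP: "\<not> P d'" if "d' < d" for d'
    using that not_less_Least unfolding d_def by blast
  obtain p where p: "p \<noteq> 0" "pev B p v = 0" "degree p = d" using Pd P_def by blast
  show False
  proof (cases "d = 0")
    case True
    then have "pev B p v = scaleC (coeff p 0) v" by (simp add: pev_def p(3))
    moreover have "coeff p 0 \<noteq> 0" using p True by (metis leading_coeff_0_iff)
    ultimately show False using p(2) v(2) by simp
  next
    case False
    have "\<exists>z. poly p z = 0"
      by (rule fundamental_theorem_of_algebra_alt) (use False p(3) in auto)
    then obtain r where r: "poly p r = 0" by blast
    then have "[:-r, 1:] dvd p" by (simp add: poly_eq_0_iff_dvd)
    then obtain q where q: "p = [:-r, 1:] * q" by (elim dvdE)
    have qnz: "q \<noteq> 0" using q p(1) by auto
    have dq: "degree p = degree q + 1" proof -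
      have "degree ([:-r, 1:] * q) = degree [:-r, 1:] + degree q"
        by (rule degree_mult_eq) (use qnz in auto)
      then show ?thesis using q by simp
    qed
    define w where "w = pev B q v"
    have "\<not> P (degree q)" using minP dq p(3) by simp
    then have wnz: "w \<noteq> 0" using qnz unfolding P_def w_def by blast
    have "p = smult (-r) q + pCons 0 q" using q by (simp add: mult_pCons_left)
    then have "pev B p v = pev B (smult (-r) q) v + pev B (pCons 0 q) v"
      by (simp only: pev_add)
    then have "pev B p v = scaleC (-r) w + B w"
      by (simp only: pev_smult pev_pCons0[OF Badd Bsc] w_def)
    then have "B w = scaleC r w" using p(2)
      by (simp add: cv.scale_minus_left algebra_simps)
    then have "r \<in> point_spectrum_bdd B" using wnz unfolding point_spectrum_bdd_def by blast
    then show False using assms(4) by simp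
  qed
qed

end
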